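(* Let $x_*$ be a feasible point of problem $(\mathcal{P})$ and $\mathcal{D}(x_* )=\partial F(x_* )+\mathcal{N}(x_* )+N_A(x_* )$. Then: (1) $0\in\mathcal{D}(x_* )$ if and only if for some $p\in\{1,\dots,d+1\}$ a $p$-point alternance exists at $x_*$; (2) if a complete (i.e. $(d+1)$-point) alternance exists at $x_*$, then $0\in\operatorname{int}\mathcal{D}(x_* )$ and $\partial F(x_* )\ne\{0\}$.
   Context: Setting: $A\subseteq\mathbb{R}^d$ nonempty closed convex; $Y$ real Banach space with dual $Y^*$, pairing $\langle\cdot,\cdot\rangle$; $K\subset Y$ nonempty closed convex cone; $W$ compact Hausdorff; $f:\mathbb{R}^d\times W\to\mathbb{R}$ differentiable in $x$ with $f,\nabla_xf$ jointly continuous; $G:\mathbb{R}^d\to Y$ continuously Fréchet differentiable. $F(x)=\max_\omega f(x,\omega)$, $W(x)=\{\omega:f(x,\omega)=F(x)\}$, $\partial F(x)=\operatorname{co}\{\nabla_xf(x,\omega):\omega\in W(x)\}$; problem $(\mathcal{P})$: minimise $F$ s.t. $G(x)\in K$, $x\in A$. $K^*=\{y^*:\langle y^*,y\rangle\le0\ \forall y\in K\}$; $\mathcal{N}(x)=\{[DG(x)]^*\lambda:\lambda\in K^*,\langle\lambda,G(x)\rangle=0\}$ where $\langle[DG(x)]^*\lambda,h\rangle=\langle\lambda,DG(x)h\rangle$; $N_A(x)$ is the normal cone of convex analysis to $A$ at $x$. Fix $Z\subset\mathbb{R}^d$ consisting of $d$ linearly independent vectors, and sets $\eta(x_* )\subseteq\mathcal{N}(x_*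 )$, $n_A(x_* )\subseteq N_A(x_* )$ whose convex conic hulls are $\mathcal{N}(x_* )$ and $N_A(x_* )$ respectively. A $p$-point alternance ($p\in\{1,\dots,d+1\}$) exists at $x_*$ if there exist $k_0\in\{1,\dots,p\}$, $i_0\in\{k_0,\dots,p\}$, vectors $V_1,\dots,V_{k_0}\in\{\nabla_xf(x_*,\omega):\omega\in W(x_* )\}$, $V_{k_0+1},\dots,V_{i_0}\in\eta(x_* )$, $V_{i_0+1},\dots,V_p\in n_A(x_* )$ (empty ranges allowed), and $V_{p+1},\dots,V_{d+1}\in Z$, such that $\Delta_s=\det[V_1,\dots,V_{s-1},V_{s+1},\dots,V_{d+1}]$ satisfy $\Delta_s\ne0$ for $s\le p$, $\operatorname{sign}\Delta_s=-\operatorname{sign}\Delta_{s+1}$ for $s\le p-1$, $\Delta_s=0$ for $s\ge p+1$. A $(d+1)$-point alternance is called complete. *)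

theory Defs
  imports "HOL-Analysis.Analysis"
begin

definition maxF :: "(real^'n \<Rightarrow> 'w \<Rightarrow> real) \<Rightarrow> 'w set \<Rightarrow> real^'n \<Rightarrow> real" where
  "maxF f W x = (SUP w\<in>W. f x w)"

definition active :: "(real^'n \<Rightarrow> 'w \<Rightarrow> real) \<Rightarrow> 'w set \<Rightarrow> real^'n \<Rightarrow> 'w set" where
  "active f W x = {w \<in> W. f x w = maxF f W x}"

definition active_grads :: "(real^'n \<Rightarrow> 'w \<Rightarrow> real) \<Rightarrow> (real^'n \<Rightarrow> 'w \<Rightarrow> real^'n) \<Rightarrow> 'w set \<Rightarrow> real^'n \<Rightarrow> (real^'n) set" where
  "active_grads f grad W x = {grad x w | w. w \<in> active f W x}"

definition subdiffF :: "(real^'n \<Rightarrow> 'w \<Rightarrow> real) \<Rightarrow> (real^'n \<Rightarrow> 'w \<Rightarrow> real^'n) \<Rightarrow> 'w set \<Rightarrow> real^'n \<Rightarrow> (real^'n) set" where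
  "subdiffF f grad W x = convex hull (active_grads f grad W x)"

text \<open>Dual cone K* = { y* : <y*, y> <= 0 for all y in K } (polar cone convention of the paper).\<close>
definition dual_cone :: "'y::real_normed_vector set \<Rightarrow> ('y \<Rightarrow>\<^sub>L real) set" where
  "dual_cone K = {l. \<forall>y\<in>K. blinfun_apply l y \<le> 0}"

text \<open>N(x) = { [DG(x)]^* l : l in K*, <l, G x> = 0 }, with the adjoint identified with a vector of R^d.\<close>
definition Ncone :: "(real^'n \<Rightarrow> 'y::real_normed_vector) \<Rightarrow> (real^'n \<Rightarrow> ((real^'n) \<Rightarrow>\<^sub>L 'y)) \<Rightarrow> 'y set \<Rightarrow> real^'n \<Rightarrow> (real^'n) set" where
  "Ncone G DG K x = {v. \<exists>l\<in>dual_cone K. blinfun_apply l (G x) = 0 \<and>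
        (\<forall>h. v \<bullet> h = blinfun_apply l (blinfun_apply (DG x) h))}"

definition normal_cone :: "(real^'n) set \<Rightarrow> real^'n \<Rightarrow> (real^'n) set" where
  "normal_cone A x = {v. \<forall>y\<in>A. v \<bullet> (y - x) \<le> 0}"

definition conic_hull :: "'a::real_vector set \<Rightarrow> 'a set" where
  "conic_hull S = {y. \<exists>T c. finite T \<and> T \<subseteq> S \<and> (\<forall>t\<in>T. 0 \<le> c t) \<and> y = (\<Sum>t\<in>T. c t *\<^sub>R t)}"

text \<open>Fixed enumeration of the coordinate index type by 1..d (the alternance conditions do not
  depend on its choice, since it changes every determinant by the same sign).\<close>
definition pos :: "'n::finite \<Rightarrow> nat" where
  "pos = (SOME h. bij_betw h (UNIV::'n set) {1..CARD('n)})"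

definition skip :: "nat \<Rightarrow> nat \<Rightarrow> nat" where
  "skip s j = (if j < s then j else Suc j)"

text \<open>Delta_s = det [V_1,...,V_{s-1},V_{s+1},...,V_{d+1}] (vectors as columns).\<close>
definition Delta :: "(nat \<Rightarrow> real^'n::finite) \<Rightarrow> nat \<Rightarrow> real" where
  "Delta V s = det ((\<chi> i c. V (skip s (pos c)) $ i) :: real^'n^'n)"

definition alternance :: "(real^'n::finite) set \<Rightarrow> (real^'n) set \<Rightarrow> (real^'n) set \<Rightarrow> (real^'n) set \<Rightarrow> nat \<Rightarrow> bool" where
  "alternance Gr eta nA Z p \<longleftrightarrow>
     (\<exists>k0 i0 (V :: nat \<Rightarrow> real^'n). 1 \<le> k0 \<and> k0 \<le> i0 \<and> i0 \<le> p \<and>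
        (\<forall>s\<in>{1..k0}. V s \<in> Gr) \<and>
        (\<forall>s\<in>{k0<..i0}. V s \<in> eta) \<and>
        (\<forall>s\<in>{i0<..p}. V s \<in> nA) \<and>
        (\<forall>s\<in>{p<..CARD('n)+1}. V s \<in> Z) \<and>
        (\<forall>s\<in>{1..p}. Delta V s \<noteq> 0) \<and>
        (\<forall>s\<in>{1..<p}. sgn (Delta V s) = - sgn (Delta V (Suc s))) \<and>
        (\<forall>s\<in>{p<..CARD('n)+1}. Delta V s = 0))"

end

theory Submission
  imports Defs
begin

lemma pos_bij: "bij_betw (pos::'n::finite \<Rightarrow> nat) UNIV {1..CARD('n)}"
proof -
  obtain h where h: "bij_betw h (UNIV::'n set) {0..<CARD('n)}"
    using ex_bij_betw_finite_nat[of "UNIV::'n set"] by auto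
  have "bij_betw (\<lambda>x. Suc (h x)) (UNIV::'n set) {1..CARD('n)}"
  proof -
    have "bij_betw Suc {0..<CARD('n)} {1..CARD('n)}"
      by (simp add: bij_betw_def image_Suc_atLeastLessThan atLeastLessThanSuc_atLeastAtMost)
    from bij_betw_trans[OF h this] show ?thesis by (simp add: o_def)
  qed
  then have "\<exists>h. bij_betw h (UNIV::'n set) {1..CARD('n)}" by blast
  then show ?thesis unfolding pos_def by (rule someI_ex)
qed

lemma pos_range: "pos (c::'n::finite) \<in> {1..CARD('n)}"
  using pos_bij bij_betwE by blast

lemma pos_inj: "pos (c::'n::finite) = pos c' \<longleftrightarrow> c = c'"
  using pos_bij[where 'n='n] by (auto simp: bij_betw_def inj_on_def)

lemma pos_surj: "j \<in> {1..CARD('n)} \<Longrightarrow> \<exists>c::'n::finite. pos c = j"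
  using pos_bij[where 'n='n] unfolding bij_betw_def by (metis rangeE)

definition rowmat :: "(nat \<Rightarrow> real^'n::finite) \<Rightarrow> nat \<Rightarrow> real^'n^'n" where
  "rowmat V s = (\<chi> c. V (skip s (pos c)))"

lemma Delta_rowmat: "Delta V s = det (rowmat V s)"
proof -
  have "(\<chi> i c. V (skip s (pos c)) $ i) = transpose (rowmat V s)"
    by (simp add: rowmat_def transpose_def)
  then show ?thesis by (simp add: Delta_def det_transpose)
qed

lemma rows_eq_range: "rows (A::'a^'n^'m) = range (\<lambda>i. A $ i)"
  by (auto simp: rows_def row_def vec_lambda_eta)

lemma det_nz_iff_span: "det (A::real^'n::finite^'n) \<noteq> 0 \<longleftrightarrow> span (range (\<lambda>i. A $ i)) = UNIV"
proof
  assume "det A \<noteq> 0"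
  then have "invertible A" by (simp add: invertible_det_nz)
  then obtain B where "B ** A = mat 1" by (auto simp: invertible_def)
  then show "span (range (\<lambda>i. A $ i)) = UNIV"
    using matrix_left_invertible_span_rows[of A] rows_eq_range[of A] by auto
next
  assume "span (range (\<lambda>i. A $ i)) = UNIV"
  then obtain B :: "real^'n^'n" where "B ** A = mat 1"
    using matrix_left_invertible_span_rows[of A] rows_eq_range[of A] by auto
  then have "det B * det A = 1" by (metis det_I det_mul)
  then show "det A \<noteq> 0" by auto
qed

lemma det_replace_span:
  fixes A :: "real^'n::finite^'n"
  assumes "x \<in> span {A $ j |j. j \<noteq> i}"
  shows "det (\<chi> k. if k = i then u + x else A $ k) = det (\<chi> k. if k = i then u else A $ k)"
proof -
  let ?A = "(\<chi> k. if k = i then u else A $ k) :: real^'n^'n"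
  have "{row j ?A |j. j \<noteq> i} = {A $ j |j. j \<noteq> i}"
    by (auto simp: row_def vec_lambda_eta)
  with assms have "x \<in> vec.span {row j ?A |j. j \<noteq> i}" by (simp add: span_vec_eq)
  from det_row_span[OF this] show ?thesis
    by (simp add: row_def vec_lambda_eta if_distrib cong: if_cong)
qed


lemma rowmat_nth: "rowmat V s $ c = V (skip s (pos c))"
  by (simp add: rowmat_def)

lemma span_sum_mem:
  assumes "\<And>j. j \<in> J \<Longrightarrow> v j \<in> span S"
  shows "(\<Sum>j\<in>J. a j *\<^sub>R v j) \<in> span S"
  by (intro span_sum span_mul assms)

lemma det_row_mul_R:
  fixes A :: "real^'n::finite^'n"
  shows "det (\<chi> c. if c = k then t *\<^sub>R u else A $ c) = t * det (\<chi> c. if c = k then u else A $ c)"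
  proof -
  have "t *\<^sub>R u = t *s u" by (simp add: scalar_mult_eq_scaleR)
  note X = det_row_mul[of k t "\<lambda>_. u" "\<lambda>c. A $ c"]
  show ?thesis using X[unfolded scalar_mult_eq_scaleR] by (simp add: vec_lambda_eta)
qed

lemma adjacent:
  fixes V :: "nat \<Rightarrow> real^'n::finite"
  assumes rel: "(\<Sum>j\<in>{1..CARD('n)+1}. g j *\<^sub>R V j) = 0" and s: "1 \<le> s" "s \<le> CARD('n)"
  shows "g s * Delta V (Suc s) = - g (Suc s) * Delta V s"
proof -
  obtain k :: 'n where k: "pos k = s" using pos_surj[where 'n='n, of s] s by auto
  define R1 where "R1 = rowmat V (Suc s)"
  have R0: "rowmat V s = (\<chi> c. if c = k then V (Suc s) else R1 $ c)"
  proof -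
    have "rowmat V s $ c = (if c = k then V (Suc s) else R1 $ c)" for c
    proof (cases "c = k")
      case True then show ?thesis by (simp add: rowmat_nth k skip_def)
    next
      case False
      then have "pos c \<noteq> s" using k pos_inj by metis
      then show ?thesis using False by (auto simp: rowmat_nth R1_def skip_def)
    qed
    then show ?thesis by (simp add: vec_eq_iff)
  qed
  have R1k: "R1 = (\<chi> c. if c = k then V s else R1 $ c)"
    by (simp add: vec_eq_iff R1_def rowmat_nth k skip_def)
  define w where "w = (\<Sum>j\<in>{1..CARD('n)+1} - {s, Suc s}. g j *\<^sub>R V j)"
  have split: "{1..CARD('n)+1} = insert s (insert (Suc s) ({1..CARD('n)+1} - {s, Suc s}))"
    using s by auto
  have "(\<Sum>j\<in>{1..CARD('n)+1}. g j *\<^sub>R V j) = g s *\<^sub>R V s + (g (Suc s) *\<^sub>R V (Suc s) + w)"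
    unfolding w_def by (subst split) (simp add: sum.insert)
  with rel have gs: "g s *\<^sub>R V s = (- g (Suc s)) *\<^sub>R V (Suc s) + (- w)"
    by (simp add: algebra_simps eq_neg_iff_add_eq_0)
  have wspan: "- w \<in> span {R1 $ j |j. j \<noteq> k}"
  proof -
    have "V j \<in> span {R1 $ j |j. j \<noteq> k}" if j: "j \<in> {1..CARD('n)+1} - {s, Suc s}" for j
    proof (cases "j < s")
      case True
      then obtain c :: 'n where c: "pos c = j" using pos_surj[where 'n='n, of j] j s by auto
      then have "c \<noteq> k" using k True by auto
      moreover have "R1 $ c = V j" using True c by (simp add: R1_def rowmat_nth skip_def)
      ultimately show ?thesis by (metis (mono_tags, lifting) mem_Collect_eq span_base)
    next
      case False
      then have jg: "j > Suc s" using j by auto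
      then obtain c :: 'n where c: "pos c = j - 1" using pos_surj[where 'n='n, of "j - 1"] j s by force
      then have "c \<noteq> k" using k jg by auto
      moreover have "skip (Suc s) (j - 1) = j" using jg by (simp add: skip_def)
      then have "R1 $ c = V j" using c by (simp add: R1_def rowmat_nth)
      ultimately show ?thesis by (metis (mono_tags, lifting) mem_Collect_eq span_base)
    qed
    then have "w \<in> span {R1 $ j |j. j \<noteq> k}" unfolding w_def by (intro span_sum_mem)
    then show ?thesis by (rule span_neg)
  qed
  have "g s * Delta V (Suc s) = g s * det R1" by (simp add: Delta_rowmat R1_def)
  also have "\<dots> = g s * det (\<chi> c. if c = k then V s else R1 $ c)" using R1k by simp
  also have "\<dots> = det (\<chi> c. if c = k then g s *\<^sub>R V s else R1 $ c)" by (simp add: det_row_mul_R)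
  also have "\<dots> = det (\<chi> c. if c = k then (- g (Suc s)) *\<^sub>R V (Suc s) + (- w) else R1 $ c)"
    by (simp only: gs)
  also have "\<dots> = det (\<chi> c. if c = k then (- g (Suc s)) *\<^sub>R V (Suc s) else R1 $ c)"
    by (rule det_replace_span[OF wspan])
  also have "\<dots> = - g (Suc s) * det (\<chi> c. if c = k then V (Suc s) else R1 $ c)"
    by (simp add: det_row_mul_R)
  also have "\<dots> = - g (Suc s) * Delta V s" by (simp add: Delta_rowmat R0)
  finally show ?thesis .
qed


lemma rows_rowmat1:
  fixes V :: "nat \<Rightarrow> real^'n::finite"
  shows "range (\<lambda>c. rowmat V 1 $ c) = V ` {2..CARD('n)+1}"
proof -
  have "range (\<lambda>c::'n. skip 1 (pos c)) = {2..CARD('n)+1}"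
  proof
    show "range (\<lambda>c::'n. skip 1 (pos c)) \<subseteq> {2..CARD('n)+1}"
    proof clarify
      fix c :: 'n
      have "pos c \<in> {1..CARD('n)}" by (rule pos_range)
      then show "skip 1 (pos c) \<in> {2..CARD('n)+1}" by (auto simp: skip_def)
    qed
    show "{2..CARD('n)+1} \<subseteq> range (\<lambda>c::'n. skip 1 (pos c))"
    proof
      fix j assume j: "j \<in> {2..CARD('n)+1}"
      then obtain c :: 'n where "pos c = j - 1" using pos_surj[where 'n='n, of "j - 1"] by force
      moreover have "skip 1 (j - 1) = j" using j by (auto simp: skip_def)
      ultimately show "j \<in> range (\<lambda>c::'n. skip 1 (pos c))" by (metis rangeI)
    qed
  qed
  moreover have "range (\<lambda>c. rowmat V 1 $ c) = V ` range (\<lambda>c::'n. skip 1 (pos c))"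
    by (simp add: rowmat_nth image_image)
  ultimately show ?thesis by simp
qed

lemma others_rows:
  fixes V :: "nat \<Rightarrow> real^'n::finite"
  assumes s: "1 < s" "s \<le> CARD('n)+1" and k1: "pos k1 = 1"
  shows "{rowmat V s $ c | c. c \<noteq> k1} = V ` ({2..CARD('n)+1} - {s})"
proof
  show "{rowmat V s $ c | c. c \<noteq> k1} \<subseteq> V ` ({2..CARD('n)+1} - {s})"
  proof clarify
    fix c :: 'n assume "c \<noteq> k1"
    then have "pos c \<noteq> 1" using k1 pos_inj by metis
    then have "pos c \<in> {2..CARD('n)}" using pos_range[of c] by auto
    then have "skip s (pos c) \<in> {2..CARD('n)+1} - {s}" by (auto simp: skip_def)
    then show "rowmat V s $ c \<in> V ` ({2..CARD('n)+1} - {s})" by (simp add: rowmat_nth)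
  qed
  show "V ` ({2..CARD('n)+1} - {s}) \<subseteq> {rowmat V s $ c | c. c \<noteq> k1}"
  proof
    fix y assume "y \<in> V ` ({2..CARD('n)+1} - {s})"
    then obtain j where j: "j \<in> {2..CARD('n)+1} - {s}" "y = V j" by blast
    show "y \<in> {rowmat V s $ c | c. c \<noteq> k1}"
    proof (cases "j < s")
      case True
      then obtain c :: 'n where c: "pos c = j" using pos_surj[where 'n='n, of j] j s by force
      then have "c \<noteq> k1" using k1 j by auto
      moreover have "rowmat V s $ c = V j" using True c by (simp add: rowmat_nth skip_def)
      ultimately show ?thesis using j by force
    next
      case False
      then have jg: "j > s" using j by auto
      then obtain c :: 'n where c: "pos c = j - 1" using pos_surj[where 'n='n, of "j - 1"] j s by force
      then have "c \<noteq> k1" using k1 jg s by auto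
      moreover have "skip s (j - 1) = j" using jg by (simp add: skip_def)
      then have "rowmat V s $ c = V j" using c by (simp add: rowmat_nth)
      ultimately show ?thesis using j by force
    qed
  qed
qed

lemma first_slot:
  fixes V :: "nat \<Rightarrow> real^'n::finite"
  assumes s: "1 < s" "s \<le> CARD('n)+1"
    and x: "V 1 - b *\<^sub>R V s \<in> span (V ` ({2..CARD('n)+1} - {s}))"
  shows "\<exists>M::real^'n^'n. Delta V s = b * det M \<and> (span (V ` {2..CARD('n)+1}) = UNIV \<longrightarrow> det M \<noteq> 0)"
proof -
  obtain k1 :: 'n where k1: "pos k1 = 1" using pos_surj[where 'n='n, of 1] by force
  define R where "R = rowmat V s"
  have Rk1: "R $ k1 = V 1" using s k1 by (simp add: R_def rowmat_nth skip_def)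
  have oth: "{R $ c | c. c \<noteq> k1} = V ` ({2..CARD('n)+1} - {s})"
    unfolding R_def by (rule others_rows[OF s k1])
  define M where "M = (\<chi> c. if c = k1 then V s else R $ c)"
  have "R = (\<chi> c. if c = k1 then b *\<^sub>R V s + (V 1 - b *\<^sub>R V s) else R $ c)"
    using Rk1 by (simp add: vec_eq_iff)
  then have "det R = det (\<chi> c. if c = k1 then b *\<^sub>R V s + (V 1 - b *\<^sub>R V s) else R $ c)" by simp
  also have "\<dots> = det (\<chi> c. if c = k1 then b *\<^sub>R V s else R $ c)"
    by (rule det_replace_span) (use x oth in simp)
  also have "\<dots> = b * det M" unfolding M_def by (rule det_row_mul_R)
  finally have 1: "Delta V s = b * det M" by (simp add: Delta_rowmat R_def)
  have "range (\<lambda>c. M $ c) = insert (V s) {R $ c | c. c \<noteq> k1}"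
    by (auto simp: M_def)
  also have "\<dots> = V ` {2..CARD('n)+1}" using oth s by auto
  finally have "span (V ` {2..CARD('n)+1}) = UNIV \<longrightarrow> det M \<noteq> 0"
    by (simp add: det_nz_iff_span)
  with 1 show ?thesis by blast
qed


lemma span_image_coeffs:
  fixes V :: "'i \<Rightarrow> 'a::real_vector"
  assumes "finite I" "y \<in> span (V ` I)"
  shows "\<exists>u. y = (\<Sum>i\<in>I. u i *\<^sub>R V i)"
  using assms(2)
proof (induction rule: span_induct_alt)
  case base
  show ?case by (rule exI[of _ "\<lambda>_. 0"]) simp
next
  case (step c x y)
  then obtain i0 where i0: "i0 \<in> I" "x = V i0" by blast
  from step obtain u where u: "y = (\<Sum>i\<in>I. u i *\<^sub>R V i)" by blast
  have "(\<Sum>i\<in>I. (u i + (if i = i0 then c else 0)) *\<^sub>R V i)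
      = (\<Sum>i\<in>I. u i *\<^sub>R V i) + (\<Sum>i\<in>I. (if i = i0 then c *\<^sub>R V i else 0))"
  proof -
    have e: "\<And>i. (u i + (if i = i0 then c else 0)) *\<^sub>R V i = u i *\<^sub>R V i + (if i = i0 then c *\<^sub>R V i else 0)"
      by (simp add: scaleR_add_left)
    show ?thesis by (simp only: e sum.distrib)
  qed
  also have "\<dots> = y + c *\<^sub>R x" using i0 assms(1) u by simp
  finally show ?case by (metis add.commute)
qed

definition cc :: "'a::real_vector set \<Rightarrow> bool" where
  "cc C \<longleftrightarrow> 0 \<in> C \<and> (\<forall>x\<in>C. \<forall>y\<in>C. x + y \<in> C) \<and> (\<forall>a x. 0 \<le> a \<longrightarrow> x \<in> C \<longrightarrow> a *\<^sub>R x \<in> C)"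

lemma cc_sum:
  assumes "cc C" "finite I" "\<And>i. i \<in> I \<Longrightarrow> 0 \<le> a i" "\<And>i. i \<in> I \<Longrightarrow> v i \<in> C"
  shows "(\<Sum>i\<in>I. a i *\<^sub>R v i) \<in> C"
  using assms(2-4)
proof (induction I rule: finite_induct)
  case empty then show ?case using assms(1) by (simp add: cc_def)
next
  case (insert x F)
  then show ?case using assms(1) unfolding cc_def by (simp add: sum.insert)
qed

lemma cc_normal_cone: "cc (normal_cone A x)"
  unfolding cc_def normal_cone_def
  by (auto simp: inner_add_left intro: add_nonpos_nonpos mult_nonneg_nonpos)

lemma cc_Ncone: "cc (Ncone G DG K x)"
proof -
  have "0 \<in> Ncone G DG K x"
    unfolding Ncone_def dual_cone_def by (rule CollectI, rule bexI[of _ 0]) auto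
  moreover have "a + b \<in> Ncone G DG K x" if "a \<in> Ncone G DG K x" "b \<in> Ncone G DG K x" for a b
  proof -
    from that obtain l1 l2 where l: "l1 \<in> dual_cone K" "blinfun_apply l1 (G x) = 0"
      "\<forall>h. a \<bullet> h = blinfun_apply l1 (blinfun_apply (DG x) h)"
      "l2 \<in> dual_cone K" "blinfun_apply l2 (G x) = 0"
      "\<forall>h. b \<bullet> h = blinfun_apply l2 (blinfun_apply (DG x) h)"
      unfolding Ncone_def by blast
    have "l1 + l2 \<in> dual_cone K" using l unfolding dual_cone_def
      by (auto simp: blinfun.add_left intro: add_nonpos_nonpos)
    then show ?thesis unfolding Ncone_def using l
      by (intro CollectI bexI[of _ "l1 + l2"]) (auto simp: blinfun.add_left inner_add_left)
  qed
  moreover have "c *\<^sub>R a \<in> Ncone G DG K x" if "a \<in> Ncone G DG K x" "0 \<le> c" for a c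
  proof -
    from that obtain l1 where l: "l1 \<in> dual_cone K" "blinfun_apply l1 (G x) = 0"
      "\<forall>h. a \<bullet> h = blinfun_apply l1 (blinfun_apply (DG x) h)"
      unfolding Ncone_def by blast
    have "c *\<^sub>R l1 \<in> dual_cone K" using l that unfolding dual_cone_def
      by (auto simp: blinfun.scaleR_left mult_nonneg_nonpos)
    then show ?thesis unfolding Ncone_def using l
      by (intro CollectI bexI[of _ "c *\<^sub>R l1"]) (auto simp: blinfun.scaleR_left)
  qed
  ultimately show ?thesis unfolding cc_def by blast
qed

lemma memD:
  fixes V :: "nat \<Rightarrow> 'a::real_vector"
  assumes V: "\<forall>s\<in>{1..k0}. V s \<in> Gr" "\<forall>s\<in>{k0<..i0}. V s \<in> N1" "\<forall>s\<in>{i0<..p}. V s \<in> N2"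
    and ord: "k0 \<le> i0" "i0 \<le> p"
    and cc: "cc N1" "cc N2"
    and a: "\<forall>s\<in>{1..p}. 0 \<le> a s" "(\<Sum>s\<in>{1..k0}. a s) = 1"
  shows "(\<Sum>s\<in>{1..p}. a s *\<^sub>R V s) \<in> {x + y + z | x y z. x \<in> convex hull Gr \<and> y \<in> N1 \<and> z \<in> N2}"
proof -
  have split: "{1..p} = ({1..k0} \<union> {k0<..i0}) \<union> {i0<..p}" using ord by auto
  have "(\<Sum>s\<in>{1..p}. a s *\<^sub>R V s) = (\<Sum>s\<in>{1..k0}. a s *\<^sub>R V s) + (\<Sum>s\<in>{k0<..i0}. a s *\<^sub>R V s)
     + (\<Sum>s\<in>{i0<..p}. a s *\<^sub>R V s)"
  proof -
    have "(\<Sum>s\<in>{1..p}. a s *\<^sub>R V s) = (\<Sum>s\<in>{1..k0} \<union> {k0<..i0}. a s *\<^sub>R V s) + (\<Sum>s\<in>{i0<..p}. a s *\<^sub>R V s)"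
      unfolding split by (rule sum.union_disjoint) (use ord in auto)
    moreover have "(\<Sum>s\<in>{1..k0} \<union> {k0<..i0}. a s *\<^sub>R V s) = (\<Sum>s\<in>{1..k0}. a s *\<^sub>R V s) + (\<Sum>s\<in>{k0<..i0}. a s *\<^sub>R V s)"
      by (rule sum.union_disjoint) auto
    ultimately show ?thesis by simp
  qed
  moreover have "(\<Sum>s\<in>{1..k0}. a s *\<^sub>R V s) \<in> convex hull Gr"
    by (rule convex_sum) (use a V ord in \<open>auto intro: hull_inc\<close>)
  moreover have "(\<Sum>s\<in>{k0<..i0}. a s *\<^sub>R V s) \<in> N1"
    by (rule cc_sum[OF cc(1)]) (use a V ord in auto)
  moreover have "(\<Sum>s\<in>{i0<..p}. a s *\<^sub>R V s) \<in> N2"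
    by (rule cc_sum[OF cc(2)]) (use a V ord in auto)
  ultimately show ?thesis by blast
qed


lemma sgn_step:
  fixes a b g h :: real
  assumes "a \<noteq> 0" "b \<noteq> 0" "sgn a = - sgn b" "g * b = - h * a" "g > 0"
  shows "h > 0"
proof -
  have ab: "a * b < 0" using assms(1-3)
    by (cases "a > 0"; cases "b > 0") (auto simp: sgn_if mult_pos_neg mult_neg_pos split: if_splits)
  have "h * (a * a) = - g * (a * b)" using assms(4) by (simp add: algebra_simps)
  moreover have "- g * (a * b) > 0" using ab assms(5) by (simp add: mult_pos_neg)
  moreover have "a * a > 0" using assms(1) by (meson linorder_neqE_linordered_idom mult_neg_neg mult_pos_pos)
  ultimately show ?thesis by (metis zero_less_mult_pos2)
qed

lemma alt_core:
  fixes V :: "nat \<Rightarrow> real^'n::finite"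
  assumes p: "1 \<le> p" "p \<le> CARD('n)+1"
    and nz: "\<forall>s\<in>{1..p}. Delta V s \<noteq> 0"
    and sg: "\<forall>s\<in>{1..<p}. sgn (Delta V s) = - sgn (Delta V (Suc s))"
    and z: "\<forall>s\<in>{p<..CARD('n)+1}. Delta V s = 0"
  shows "\<exists>g. (\<forall>s\<in>{1..p}. g s > 0) \<and> (\<Sum>s\<in>{1..p}. g s *\<^sub>R V s) = 0
           \<and> span (V ` {2..CARD('n)+1}) = UNIV"
proof -
  have "det (rowmat V 1) \<noteq> 0" using nz p by (simp add: Delta_rowmat)
  then have sp: "span (V ` {2..CARD('n)+1}) = UNIV"
    using det_nz_iff_span[of "rowmat V 1"] rows_rowmat1[of V] by simp
  then obtain u where u: "V 1 = (\<Sum>i\<in>{2..CARD('n)+1}. u i *\<^sub>R V i)"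
    using span_image_coeffs[of "{2..CARD('n)+1}" "V 1" V] by auto
  define g where "g s = (if s = 1 then 1 else - u s)" for s
  have ins: "{1..CARD('n)+1} = insert 1 {2..CARD('n)+1}" by auto
  have rel: "(\<Sum>s\<in>{1..CARD('n)+1}. g s *\<^sub>R V s) = 0"
  proof -
    have "(\<Sum>s\<in>{2..CARD('n)+1}. g s *\<^sub>R V s) = - V 1"
      unfolding u g_def by (simp add: sum_negf)
    then show ?thesis unfolding ins by (simp add: sum.insert g_def)
  qed
  have gz: "g s = 0" if s: "s \<in> {p<..CARD('n)+1}" for s
  proof -
    have s1: "1 < s" "s \<le> CARD('n)+1" using s p by auto
    have ins2: "{2..CARD('n)+1} = insert s ({2..CARD('n)+1} - {s})" using s1 by auto
    have "V 1 - u s *\<^sub>R V s = (\<Sum>i\<in>{2..CARD('n)+1} - {s}. u i *\<^sub>R V i)"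
    proof -
      have r: "(\<Sum>i\<in>{2..CARD('n)+1}. u i *\<^sub>R V i) = u s *\<^sub>R V s + (\<Sum>i\<in>{2..CARD('n)+1} - {s}. u i *\<^sub>R V i)"
        by (rule sum.remove) (use s1 in auto)
      show ?thesis unfolding u r by (rule add_diff_cancel_left')
    qed
    also have "\<dots> \<in> span (V ` ({2..CARD('n)+1} - {s}))"
      by (intro span_sum_mem span_base) auto
    finally obtain M :: "real^'n^'n" where "Delta V s = u s * det M" "det M \<noteq> 0"
      using first_slot[OF s1] sp by blast
    with z s have "u s = 0" by auto
    then show ?thesis using s1 by (simp add: g_def)
  qed
  have gp: "\<forall>s. 1 \<le> s \<longrightarrow> s \<le> p \<longrightarrow> g s > 0"
  proof (intro allI)
    fix s show "1 \<le> s \<longrightarrow> s \<le> p \<longrightarrow> g s > 0"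
    proof (induction s)
      case 0 then show ?case by simp
    next
      case (Suc s)
      show ?case
      proof (cases "s = 0")
        case True then show ?thesis by (simp add: g_def)
      next
        case False
        show ?thesis
        proof (intro impI)
          assume "Suc s \<le> p"
          then have s: "1 \<le> s" "s \<le> CARD('n)" "s < p" using False p by auto
          have "g s > 0" using Suc.IH s by auto
          from adjacent[OF rel s(1,2)] have "g s * Delta V (Suc s) = - g (Suc s) * Delta V s" .
          then show "g (Suc s) > 0"
            by (rule sgn_step[rotated 3]) (use nz sg s \<open>g s > 0\<close> \<open>Suc s \<le> p\<close> in auto)
        qed
      qed
    qed
  qed
  have "(\<Sum>s\<in>{1..CARD('n)+1}. g s *\<^sub>R V s) = (\<Sum>s\<in>{1..p}. g s *\<^sub>R V s) + (\<Sum>s\<in>{p<..CARD('n)+1}. g s *\<^sub>R V s)"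
  proof -
    have e: "{1..CARD('n)+1} = {1..p} \<union> {p<..CARD('n)+1}" using p by auto
    show ?thesis unfolding e by (rule sum.union_disjoint) auto
  qed
  moreover have "(\<Sum>s\<in>{p<..CARD('n)+1}. g s *\<^sub>R V s) = 0" using gz by simp
  ultimately have "(\<Sum>s\<in>{1..p}. g s *\<^sub>R V s) = 0" using rel by simp
  then show ?thesis using gp sp by (intro exI[of _ g]) auto
qed


lemma minimal_relation:
  fixes vec :: "'i \<Rightarrow> 'a::real_vector"
  assumes I: "finite I" and w: "\<forall>i\<in>I. 0 \<le> w i" "(\<Sum>i\<in>I. w i *\<^sub>R vec i) = 0"
    and i1: "i1 \<in> I" "Q i1" "w i1 > 0"
  shows "\<exists>J c. J \<subseteq> I \<and> (\<exists>j\<in>J. Q j) \<and> (\<forall>j\<in>J. c j > 0) \<and> (\<Sum>j\<in>J. c j *\<^sub>R vec j) = 0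
          \<and> (\<forall>e. (\<Sum>j\<in>J. e j *\<^sub>R vec j) = 0 \<longrightarrow> (\<exists>t. \<forall>j\<in>J. e j = t * c j))"
proof -
  define P where "P n \<longleftrightarrow> (\<exists>J c. J \<subseteq> I \<and> card J = n \<and> (\<exists>j\<in>J. Q j) \<and> (\<forall>j\<in>J. c j > 0)
      \<and> (\<Sum>j\<in>J. c j *\<^sub>R vec j) = 0)" for n
  have "P (card {i\<in>I. w i > 0})"
  proof -
    have "(\<Sum>j\<in>{i\<in>I. w i > 0}. w j *\<^sub>R vec j) = (\<Sum>i\<in>I. w i *\<^sub>R vec i)"
      by (rule sum.mono_neutral_left) (use I w in \<open>auto simp: less_le\<close>)
    then show ?thesis unfolding P_def using w i1
      by (intro exI[of _ "{i\<in>I. w i > 0}"] exI[of _ w]) auto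
  qed
  then obtain n where Pn: "P n" and least: "\<And>m. m < n \<Longrightarrow> \<not> P m"
    using exists_least_iff[of P] by blast
  then obtain J c where J: "J \<subseteq> I" "card J = n" "\<exists>j\<in>J. Q j" "\<forall>j\<in>J. c j > 0"
    "(\<Sum>j\<in>J. c j *\<^sub>R vec j) = 0" unfolding P_def by blast
  have fJ: "finite J" using J(1) I finite_subset by blast
  from J(3) obtain j0 where j0: "j0 \<in> J" "Q j0" by blast
  have uniq: "\<exists>t. \<forall>j\<in>J. e j = t * c j" if e: "(\<Sum>j\<in>J. e j *\<^sub>R vec j) = 0" for e
  proof (rule ccontr)
    assume nt: "\<nexists>t. \<forall>j\<in>J. e j = t * c j"
    define e' where "e' j = e j - (e j0 / c j0) * c j" for j
    have rel': "(\<Sum>j\<in>J. e' j *\<^sub>R vec j) = 0"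
    proof -
      have h: "(\<Sum>j\<in>J. ((e j0 / c j0) * c j) *\<^sub>R vec j) = (e j0 / c j0) *\<^sub>R (\<Sum>j\<in>J. c j *\<^sub>R vec j)"
        by (simp add: scaleR_sum_right)
      show ?thesis unfolding e'_def scaleR_diff_left sum_subtractf h using e J(5) by simp
    qed
    have "c j0 > 0" using J(4) j0 by auto
    then have e'0: "e' j0 = 0" by (simp add: e'_def)
    have "\<exists>j\<in>J. e' j \<noteq> 0"
    proof (rule ccontr)
      assume "\<not> (\<exists>j\<in>J. e' j \<noteq> 0)"
      then have "\<forall>j\<in>J. e j = (e j0 / c j0) * c j" by (auto simp: e'_def)
      with nt show False by blast
    qed
    then obtain f where f: "(\<Sum>j\<in>J. f j *\<^sub>R vec j) = 0" "f j0 = 0" "\<exists>j\<in>J. f j > 0"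
    proof -
      assume r: "\<And>f. (\<Sum>j\<in>J. f j *\<^sub>R vec j) = 0 \<Longrightarrow> f j0 = 0 \<Longrightarrow> \<exists>j\<in>J. 0 < f j \<Longrightarrow> thesis"
      from \<open>\<exists>j\<in>J. e' j \<noteq> 0\<close> obtain j where j: "j \<in> J" "e' j \<noteq> 0" by blast
      show thesis
      proof (cases "e' j > 0")
        case True then show thesis using r[of e'] rel' e'0 j by blast
      next
        case False
        then have "(\<lambda>j. - e' j) j > 0" using j by simp
        moreover have "(\<Sum>j\<in>J. (- e' j) *\<^sub>R vec j) = 0" using rel' by (simp add: sum_negf)
        ultimately show thesis using r[of "\<lambda>j. - e' j"] e'0 j by auto
      qed
    qed
    define S where "S = {j\<in>J. f j > 0}"
    have fS: "finite S" "S \<noteq> {}" using fJ f(3) by (auto simp: S_def)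
    define t where "t = Min ((\<lambda>j. c j / f j) ` S)"
    have "t \<in> (\<lambda>j. c j / f j) ` S" unfolding t_def using fS by (intro Min_in) auto
    then obtain j1 where j1: "j1 \<in> S" "t = c j1 / f j1" by blast
    have tle: "t \<le> c j / f j" if "j \<in> S" for j unfolding t_def using fS that by (intro Min_le) auto
    define c' where "c' j = c j - t * f j" for j
    have c'nn: "c' j \<ge> 0" if "j \<in> J" for j
    proof (cases "f j > 0")
      case True
      then have "t \<le> c j / f j" using tle that by (auto simp: S_def)
      then have "t * f j \<le> c j" using True by (simp add: pos_le_divide_eq)
      then show ?thesis by (simp add: c'_def)
    next
      case False
      have "t > 0" using j1 J(4) by (auto simp: S_def)
      then have "t * f j \<le> 0" using False by (simp add: mult_nonneg_nonpos)
      then show ?thesis using J(4) that by (simp add: c'_def) (smt (verit))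
    qed
    have c'j1: "c' j1 = 0" using j1 by (auto simp: c'_def S_def)
    have c'j0: "c' j0 > 0" using f(2) J(4) j0 by (simp add: c'_def)
    define J' where "J' = {j\<in>J. c' j > 0}"
    have "J' \<subseteq> J - {j1}" using c'j1 by (auto simp: J'_def)
    moreover have "j1 \<in> J" using j1 by (auto simp: S_def)
    ultimately have "card J' < card J" using fJ
      by (metis card_Diff1_less card_mono finite_Diff le_less_trans)
    moreover have "P (card J')"
    proof -
      have "(\<Sum>j\<in>J'. c' j *\<^sub>R vec j) = (\<Sum>j\<in>J. c' j *\<^sub>R vec j)"
        by (rule sum.mono_neutral_left) (use fJ c'nn in \<open>auto simp: J'_def less_le\<close>)
      also have "\<dots> = 0"
      proof -
        have h: "(\<Sum>j\<in>J. (t * f j) *\<^sub>R vec j) = t *\<^sub>R (\<Sum>j\<in>J. f j *\<^sub>R vec j)"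
          by (simp add: scaleR_sum_right)
        show ?thesis unfolding c'_def scaleR_diff_left sum_subtractf h using J(5) f(1) by simp
      qed
      finally show ?thesis unfolding P_def using j0 c'j0
        by (intro exI[of _ J'] exI[of _ c']) (auto simp: J'_def J(1)[THEN subsetD])
    qed
    ultimately show False using least J(2) by blast
  qed
  show ?thesis using J uniq by blast
qed


lemma ex_bij_shift:
  assumes "finite M"
  shows "\<exists>h. bij_betw h {m<..m + card M} M"
proof -
  obtain h0 where h0: "bij_betw h0 {0..<card M} M" using ex_bij_betw_nat_finite[OF assms] by blast
  have "bij_betw (\<lambda>s. s - Suc m) {m<..m + card M} {0..<card M}"
    by (rule bij_betwI[where g="\<lambda>s. s + Suc m"]) auto
  from bij_betw_trans[OF this h0] show ?thesis by (auto simp: o_def)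
qed

lemma sum_two_points:
  fixes V :: "nat \<Rightarrow> 'a::real_vector"
  assumes "finite I" "i \<in> I" "j \<in> I" "i \<noteq> j"
  shows "(\<Sum>s\<in>I. (if s = i then 1 else if s = j then -1 else 0) *\<^sub>R V s) = V i - V j"
proof -
  have e: "\<And>s. (if s = i then 1 else if s = j then -1 else 0) *\<^sub>R V s
      = (if s = i then V s else 0) + (if s = j then - V s else 0)" using assms(4) by auto
  show ?thesis unfolding e sum.distrib using assms by (simp add: sum.delta)
qed

lemma build_alt:
  fixes V0 :: "nat \<Rightarrow> real^'n::finite" and Z :: "(real^'n) set"
  assumes p1: "1 \<le> p"
    and g: "\<forall>s\<in>{1..p}. g s > 0" "(\<Sum>s\<in>{1..p}. g s *\<^sub>R V0 s) = 0"
    and uniq: "\<forall>e. (\<Sum>s\<in>{1..p}. e s *\<^sub>R V0 s) = 0 \<longrightarrow> (\<exists>t. \<forall>s\<in>{1..p}. e s = t * g s)"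
    and Z: "finite Z" "card Z = CARD('n)" "independent Z"
  shows "\<exists>V. p \<le> CARD('n)+1 \<and> (\<forall>s\<in>{1..p}. V s = V0 s) \<and> (\<forall>s\<in>{p<..CARD('n)+1}. V s \<in> Z)
     \<and> (\<forall>s\<in>{1..p}. Delta V s \<noteq> 0) \<and> (\<forall>s\<in>{1..<p}. sgn (Delta V s) = - sgn (Delta V (Suc s)))
     \<and> (\<forall>s\<in>{p<..CARD('n)+1}. Delta V s = 0)"
proof -
  have g1: "g 1 > 0" using g p1 by auto
  have ins: "{1..p} = insert 1 {2..p}" using p1 by auto
  have inj: "inj_on V0 {2..p}"
  proof (rule inj_onI, rule ccontr)
    fix i j assume ij: "i \<in> {2..p}" "j \<in> {2..p}" "V0 i = V0 j" "i \<noteq> j"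
    define e where "e s = (if s = i then 1 else if s = j then -1 else (0::real))" for s
    have "(\<Sum>s\<in>{1..p}. e s *\<^sub>R V0 s) = V0 i - V0 j"
      unfolding e_def by (rule sum_two_points) (use ij in auto)
    then obtain t where t: "\<forall>s\<in>{1..p}. e s = t * g s" using uniq ij by auto
    then have "e 1 = t * g 1" using p1 by auto
    then have "t = 0" using g1 ij by (auto simp: e_def)
    moreover have "e i = t * g i" using t ij by auto
    ultimately show False by (simp add: e_def)
  qed
  define B0 where "B0 = V0 ` {2..p}"
  have cB0: "card B0 = p - 1" using inj by (simp add: B0_def card_image)
  have indB0: "independent B0"
  proof
    assume "dependent B0"
    then obtain u v where uv: "v \<in> B0" "u v \<noteq> 0" "(\<Sum>v\<in>B0. u v *\<^sub>R v) = 0"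
      using real_vector.dependent_finite[of B0] by (auto simp: B0_def)
    define e where "e s = (if s \<in> {2..p} then u (V0 s) else 0)" for s
    have "(\<Sum>s\<in>{1..p}. e s *\<^sub>R V0 s) = (\<Sum>s\<in>{2..p}. e s *\<^sub>R V0 s)"
      unfolding ins by (simp add: sum.insert e_def)
    also have "\<dots> = (\<Sum>s\<in>{2..p}. u (V0 s) *\<^sub>R V0 s)" by (simp add: e_def)
    also have "\<dots> = (\<Sum>v\<in>B0. u v *\<^sub>R v)" unfolding B0_def by (rule sum.reindex[OF inj, symmetric, unfolded o_def])
    finally obtain t where t: "\<forall>s\<in>{1..p}. e s = t * g s" using uniq uv by auto
    then have "e 1 = t * g 1" using p1 by auto
    then have "t = 0" using g1 by (simp add: e_def)
    moreover obtain s where s: "s \<in> {2..p}" "v = V0 s" using uv B0_def by auto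
    moreover have "e s = t * g s" using t s by auto
    ultimately show False using uv by (auto simp: e_def)
  qed
  have V01: "V0 1 \<in> span B0"
  proof -
    have "g 1 *\<^sub>R V0 1 + (\<Sum>s\<in>{2..p}. g s *\<^sub>R V0 s) = 0" using g(2) unfolding ins by (simp add: sum.insert)
    then have h: "g 1 *\<^sub>R V0 1 = - (\<Sum>s\<in>{2..p}. g s *\<^sub>R V0 s)"
      by (simp add: eq_neg_iff_add_eq_0)
    have "V0 1 = (1 / g 1) *\<^sub>R (g 1 *\<^sub>R V0 1)" using g1 by simp
    also have "\<dots> = (1 / g 1) *\<^sub>R (- (\<Sum>s\<in>{2..p}. g s *\<^sub>R V0 s))" by (simp only: h)
    also have "\<dots> = (- 1 / g 1) *\<^sub>R (\<Sum>s\<in>{2..p}. g s *\<^sub>R V0 s)" by simp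
    finally have "V0 1 = (- 1 / g 1) *\<^sub>R (\<Sum>s\<in>{2..p}. g s *\<^sub>R V0 s)" .
    also have "\<dots> \<in> span B0" unfolding B0_def by (intro span_mul span_sum_mem span_base) auto
    finally show ?thesis .
  qed
  obtain B where B: "B0 \<subseteq> B" "B \<subseteq> B0 \<union> Z" "independent B" "B0 \<union> Z \<subseteq> span B"
    using maximal_independent_subset_extend[of B0 "B0 \<union> Z"] indB0 by blast
  have spZ: "span Z = UNIV"
    using card_eq_dim[of Z UNIV] Z by auto
  have spB: "span B = UNIV"
    using B(4) spZ span_mono[of Z "span B"] by (auto simp: span_span)
  have fB: "finite B" using B(3) independent_bound by blast
  have cB: "card B = CARD('n)" using basis_card_eq_dim[of B UNIV] B(3) spB by auto
  have "card B0 \<le> card B" using B(1) fB card_mono by blast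
  then have pbound: "p \<le> CARD('n)+1" using cB0 cB by auto
  define Z' where "Z' = B - B0"
  have cZ': "card Z' = CARD('n) + 1 - p" using cB cB0 B(1) fB pbound p1
    by (simp add: Z'_def card_Diff_subset finite_subset)
  obtain hz where hz: "bij_betw hz {p<..p + card Z'} Z'"
    using ex_bij_shift[of Z' p] fB by (auto simp: Z'_def)
  have hz': "bij_betw hz {p<..CARD('n)+1} Z'" using hz cZ' pbound by simp
  define V where "V s = (if s \<le> p then V0 s else hz s)" for s
  have VZ: "\<forall>s\<in>{p<..CARD('n)+1}. V s \<in> Z"
    using hz' B(2) unfolding V_def Z'_def by (auto dest: bij_betwE)
  have "V ` {2..CARD('n)+1} = V ` {2..p} \<union> V ` {p<..CARD('n)+1}"
    by (subst image_Un[symmetric], rule arg_cong[where f="image V"]) (use pbound p1 in auto)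
  also have "V ` {2..p} = B0" unfolding B0_def V_def by (auto simp: image_def)
  also have "V ` {p<..CARD('n)+1} = hz ` {p<..CARD('n)+1}" unfolding V_def by (auto simp: image_def)
  also have "\<dots> = Z'" using hz' by (simp add: bij_betw_def)
  also have "B0 \<union> Z' = B" using B(1) by (auto simp: Z'_def)
  finally have spV: "span (V ` {2..CARD('n)+1}) = UNIV" using spB by simp
  have D1: "Delta V 1 \<noteq> 0"
    using det_nz_iff_span[of "rowmat V 1"] rows_rowmat1[of V] spV by (simp add: Delta_rowmat)
  define gg where "gg s = (if s \<le> p then g s else 0)" for s
  have rel: "(\<Sum>s\<in>{1..CARD('n)+1}. gg s *\<^sub>R V s) = 0"
  proof -
    have e: "{1..CARD('n)+1} = {1..p} \<union> {p<..CARD('n)+1}" using p1 pbound by auto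
    have "(\<Sum>s\<in>{1..CARD('n)+1}. gg s *\<^sub>R V s) = (\<Sum>s\<in>{1..p}. gg s *\<^sub>R V s) + (\<Sum>s\<in>{p<..CARD('n)+1}. gg s *\<^sub>R V s)"
      unfolding e by (rule sum.union_disjoint) auto
    also have "(\<Sum>s\<in>{p<..CARD('n)+1}. gg s *\<^sub>R V s) = 0" by (simp add: gg_def)
    also have "(\<Sum>s\<in>{1..p}. gg s *\<^sub>R V s) = (\<Sum>s\<in>{1..p}. g s *\<^sub>R V0 s)"
      by (rule sum.cong) (auto simp: gg_def V_def)
    finally show ?thesis using g(2) by simp
  qed
  have adj: "gg s * Delta V (Suc s) = - gg (Suc s) * Delta V s" if "s \<in> {1..<p}" for s
    using adjacent[OF rel, of s] that pbound by auto
  have nz: "\<forall>s. 1 \<le> s \<longrightarrow> s \<le> p \<longrightarrow> Delta V s \<noteq> 0"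
  proof (intro allI)
    fix s show "1 \<le> s \<longrightarrow> s \<le> p \<longrightarrow> Delta V s \<noteq> 0"
    proof (induction s)
      case 0 then show ?case by simp
    next
      case (Suc s)
      show ?case
      proof (cases "s = 0")
        case True then show ?thesis using D1 by simp
      next
        case False
        show ?thesis
        proof (intro impI)
          assume "Suc s \<le> p"
          then have s: "s \<in> {1..<p}" using False by auto
          then have "Delta V s \<noteq> 0" using Suc.IH by auto
          moreover have "gg s > 0" "gg (Suc s) > 0" using s g(1) by (auto simp: gg_def)
          ultimately show "Delta V (Suc s) \<noteq> 0" using adj[OF s] by auto
        qed
      qed
    qed
  qed
  have sg: "sgn (Delta V s) = - sgn (Delta V (Suc s))" if s: "s \<in> {1..<p}" for s
  proof -
    have pos: "gg s > 0" "gg (Suc s) > 0" using s g(1) by (auto simp: gg_def)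
    have "sgn (gg s * Delta V (Suc s)) = sgn (- gg (Suc s) * Delta V s)" using adj[OF s] by simp
    then show ?thesis using pos by (simp add: sgn_mult)
  qed
  have zz: "Delta V s = 0" if s: "s \<in> {p<..CARD('n)+1}" for s
  proof -
    have s1: "1 < s" "s \<le> CARD('n)+1" using s p1 by auto
    have "V 1 - 0 *\<^sub>R V s = V0 1" using p1 by (simp add: V_def)
    also have "\<dots> \<in> span (V ` ({2..CARD('n)+1} - {s}))"
    proof -
      have "B0 \<subseteq> V ` ({2..CARD('n)+1} - {s})"
        unfolding B0_def using s pbound by (auto simp: V_def image_def)
      then show ?thesis using V01 span_mono by blast
    qed
    finally obtain M :: "real^'n^'n" where "Delta V s = 0 * det M" using first_slot[OF s1] by blast
    then show ?thesis by simp
  qed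
  show ?thesis
    using pbound VZ nz sg zz by (intro exI[of _ V]) (auto simp: V_def)
qed


lemma alt_in_D:
  fixes V :: "nat \<Rightarrow> 'a::real_vector"
  assumes o: "1 \<le> k0" "k0 \<le> i0" "i0 \<le> p"
    and V: "\<forall>s\<in>{1..k0}. V s \<in> Gr" "\<forall>s\<in>{k0<..i0}. V s \<in> N1" "\<forall>s\<in>{i0<..p}. V s \<in> N2"
    and cc: "cc N1" "cc N2"
    and g: "\<forall>s\<in>{1..p}. g s > 0" "(\<Sum>s\<in>{1..p}. g s *\<^sub>R V s) = 0"
  shows "0 \<in> {x + y + z | x y z. x \<in> convex hull Gr \<and> y \<in> N1 \<and> z \<in> N2}"
proof -
  define Ga where "Ga = (\<Sum>s\<in>{1..k0}. g s)"
  have Gpos: "Ga > 0" unfolding Ga_def using o g(1) by (intro sum_pos) auto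
  have "(\<Sum>s\<in>{1..p}. (g s / Ga) *\<^sub>R V s) \<in> {x + y + z | x y z. x \<in> convex hull Gr \<and> y \<in> N1 \<and> z \<in> N2}"
    by (rule memD[OF V o(2,3) cc]) (use g(1) Gpos o in \<open>auto simp: Ga_def sum_divide_distrib[symmetric]\<close>)
  moreover have "(\<Sum>s\<in>{1..p}. (g s / Ga) *\<^sub>R V s) = (1 / Ga) *\<^sub>R (\<Sum>s\<in>{1..p}. g s *\<^sub>R V s)"
    by (simp add: scaleR_sum_right)
  ultimately show ?thesis using g(2) by simp
qed

lemma alt_interior:
  fixes V :: "nat \<Rightarrow> real^'n::finite"
  assumes o: "1 \<le> k0" "k0 \<le> i0" "i0 \<le> CARD('n)+1"
    and V: "\<forall>s\<in>{1..k0}. V s \<in> Gr" "\<forall>s\<in>{k0<..i0}. V s \<in> N1" "\<forall>s\<in>{i0<..CARD('n)+1}. V s \<in> N2"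
    and cc: "cc N1" "cc N2"
    and g: "\<forall>s\<in>{1..CARD('n)+1}. g s > 0" "(\<Sum>s\<in>{1..CARD('n)+1}. g s *\<^sub>R V s) = 0"
    and D1: "det (rowmat V 1) \<noteq> 0"
  shows "0 \<in> interior {x + y + z | x y z. x \<in> convex hull Gr \<and> y \<in> N1 \<and> z \<in> N2}"
proof -
  define d where "d = CARD('n)"
  define M where "M = transpose (rowmat V 1)"
  have "det M \<noteq> 0" using D1 by (simp add: M_def det_transpose)
  then obtain Bi where Bi: "M ** Bi = mat 1" using invertible_det_nz[of M] by (auto simp: invertible_def)
  define ip where "ip j = (SOME c::'n. pos c = j)" for j
  have ip: "pos (ip j) = j" if "j \<in> {1..CARD('n)}" for j
    unfolding ip_def using pos_surj[where 'n='n, OF that] by (rule someI_ex)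
  have ip2: "ip (pos c) = c" for c :: 'n
    using ip[of "pos c"] pos_range[of c] pos_inj by blast
  define be where "be s y = (if 2 \<le> s then (Bi *v y) $ ip (s - 1) else 0)" for s y
  have Mv: "M *v x = (\<Sum>c\<in>UNIV. x $ c *\<^sub>R V (pos c + 1))" for x
  proof -
    have "skip 1 (pos c) = pos c + 1" for c :: 'n using pos_range[of c] by (simp add: skip_def)
    then show ?thesis
      by (simp add: vec_eq_iff M_def matrix_vector_mult_def transpose_def rowmat_nth sum_component mult.commute)
  qed
  have bij1: "bij_betw (\<lambda>c::'n. pos c + 1) UNIV {2..CARD('n)+1}"
  proof -
    have "bij_betw (\<lambda>j. j + 1) {1..CARD('n)} {2..CARD('n)+1}"
      by (rule bij_betwI[where g="\<lambda>j. j - 1"]) auto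
    from bij_betw_trans[OF pos_bij this] show ?thesis by (simp add: o_def)
  qed
  have yrep: "(\<Sum>s\<in>{1..d+1}. be s y *\<^sub>R V s) = y" for y
  proof -
    have ins: "{1..d+1} = insert 1 {2..d+1}" by (auto simp: d_def)
    have "(\<Sum>s\<in>{1..d+1}. be s y *\<^sub>R V s) = (\<Sum>s\<in>{2..d+1}. be s y *\<^sub>R V s)"
      unfolding ins by (simp add: be_def)
    also have "\<dots> = (\<Sum>c\<in>(UNIV::'n set). be (pos c + 1) y *\<^sub>R V (pos c + 1))"
      unfolding d_def by (rule sum.reindex_bij_betw[OF bij1, of "\<lambda>s. be s y *\<^sub>R V s", symmetric])
    also have "\<dots> = (\<Sum>c\<in>(UNIV::'n set). (Bi *v y) $ c *\<^sub>R V (pos c + 1))"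
    proof (rule sum.cong)
      fix c :: 'n
      have "pos c \<ge> 1" using pos_range[of c] by auto
      then show "be (pos c + 1) y *\<^sub>R V (pos c + 1) = (Bi *v y) $ c *\<^sub>R V (pos c + 1)"
        by (simp add: be_def ip2)
    qed simp
    also have "\<dots> = M *v (Bi *v y)" by (simp add: Mv)
    also have "\<dots> = y" by (simp add: matrix_vector_mul_assoc Bi)
    finally show ?thesis .
  qed
  define Ga where "Ga = (\<Sum>s\<in>{1..k0}. g s)"
  have Gpos: "Ga > 0" unfolding Ga_def using o g(1) by (intro sum_pos) auto
  define ta where "ta y = - (\<Sum>s\<in>{1..k0}. be s y) / Ga" for y
  define a where "a s y = g s / Ga + be s y + ta y * g s" for s y
  let ?D = "{x + y + z | x y z. x \<in> convex hull Gr \<and> y \<in> N1 \<and> z \<in> N2}"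
  define U where "U = (\<Inter>s\<in>{1..d+1}. {y. 0 < a s y})"
  have contbe: "continuous_on UNIV (be s)" for s
    unfolding be_def by (cases "2 \<le> s") (auto intro!: continuous_intros)
  have conta: "continuous_on UNIV (a s)" for s
    unfolding a_def ta_def by (intro continuous_intros contbe) (use Gpos in auto)
  have "open U" unfolding U_def
    by (intro open_INT ballI open_Collect_less continuous_intros conta) auto
  moreover have "0 \<in> U"
  proof -
    have "be s 0 = 0" for s by (simp add: be_def)
    then show ?thesis unfolding U_def a_def ta_def using g(1) Gpos by (auto simp: d_def)
  qed
  moreover have "U \<subseteq> ?D"
  proof
    fix y assume y: "y \<in> U"
    have "(\<Sum>s\<in>{1..d+1}. a s y *\<^sub>R V s) \<in> ?D"
    proof (rule memD[OF V[unfolded d_def[symmetric]] o(2) _ cc])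
      show "i0 \<le> d + 1" using o by (simp add: d_def)
      show "\<forall>s\<in>{1..d + 1}. 0 \<le> a s y" using y by (auto simp: U_def less_imp_le)
      have "(\<Sum>s\<in>{1..k0}. a s y) = (\<Sum>s\<in>{1..k0}. g s) / Ga + (\<Sum>s\<in>{1..k0}. be s y) + ta y * (\<Sum>s\<in>{1..k0}. g s)"
        by (simp add: a_def sum.distrib sum_divide_distrib sum_distrib_left)
      also have "\<dots> = 1" using Gpos by (simp only: Ga_def[symmetric] ta_def) (simp add: field_simps)
      finally show "(\<Sum>s\<in>{1..k0}. a s y) = 1" .
    qed
    moreover have "(\<Sum>s\<in>{1..d+1}. a s y *\<^sub>R V s) = y"
    proof -
      have e: "\<And>s. a s y *\<^sub>R V s = (1 / Ga) *\<^sub>R (g s *\<^sub>R V s) + be s y *\<^sub>R V s + ta y *\<^sub>R (g s *\<^sub>R V s)"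
        by (simp add: a_def algebra_simps)
      have g2: "(\<Sum>s\<in>{1..d+1}. g s *\<^sub>R V s) = 0" using g(2) by (simp only: d_def)
      have "(\<Sum>s\<in>{1..d+1}. a s y *\<^sub>R V s) = (\<Sum>s\<in>{1..d+1}. (1 / Ga) *\<^sub>R (g s *\<^sub>R V s))
         + (\<Sum>s\<in>{1..d+1}. be s y *\<^sub>R V s) + (\<Sum>s\<in>{1..d+1}. ta y *\<^sub>R (g s *\<^sub>R V s))"
        by (simp only: e sum.distrib)
      also have "\<dots> = (1 / Ga) *\<^sub>R (\<Sum>s\<in>{1..d+1}. g s *\<^sub>R V s)
         + (\<Sum>s\<in>{1..d+1}. be s y *\<^sub>R V s) + ta y *\<^sub>R (\<Sum>s\<in>{1..d+1}. g s *\<^sub>R V s)"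
        by (simp only: scaleR_sum_right)
      also have "\<dots> = y" by (simp only: g2 yrep) simp
      finally show ?thesis .
    qed
    ultimately show "y \<in> ?D" by simp
  qed
  ultimately show ?thesis by (rule interiorI)
qed


lemma sum_Pair_image:
  fixes F :: "nat \<times> 'b \<Rightarrow> 'a::comm_monoid_add"
  shows "(\<Sum>i\<in>Pair k ` S. F i) = (\<Sum>v\<in>S. F (k, v))"
  by (subst sum.reindex) (auto simp: inj_on_def)

lemma D_to_alt:
  fixes Gr eta nA Z :: "(real^'n::finite) set"
  assumes Z: "finite Z" "card Z = CARD('n)" "independent Z"
    and eta: "conic_hull eta = N1" and nA: "conic_hull nA = N2"
    and x: "a \<in> convex hull Gr" "b \<in> N1" "c \<in> N2" "a + b + c = 0"
  shows "\<exists>p\<in>{1..CARD('n)+1}. alternance Gr eta nA Z p"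
proof -
  obtain S1 u where S1: "finite S1" "S1 \<subseteq> Gr" "\<forall>v\<in>S1. 0 \<le> u v" "sum u S1 = 1" "(\<Sum>v\<in>S1. u v *\<^sub>R v) = a"
    using x(1) unfolding convex_hull_explicit by blast
  obtain T2 c2 where T2: "finite T2" "T2 \<subseteq> eta" "\<forall>v\<in>T2. 0 \<le> c2 v" "b = (\<Sum>v\<in>T2. c2 v *\<^sub>R v)"
    using x(2) unfolding eta[symmetric] conic_hull_def by blast
  obtain T3 c3 where T3: "finite T3" "T3 \<subseteq> nA" "\<forall>v\<in>T3. 0 \<le> c3 v" "c = (\<Sum>v\<in>T3. c3 v *\<^sub>R v)"
    using x(3) unfolding nA[symmetric] conic_hull_def by blast
  define I where "I = (Pair 0 ` S1 \<union> Pair 1 ` T2) \<union> Pair (2::nat) ` T3"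
  define w where "w i = (if fst i = (0::nat) then u (snd i) else if fst i = 1 then c2 (snd i) else c3 (snd i))" for i :: "nat \<times> (real^'n)"
  have fI: "finite I" using S1 T2 T3 by (simp add: I_def)
  have wnn: "\<forall>i\<in>I. 0 \<le> w i" using S1 T2 T3 by (auto simp: I_def w_def)
  have "(\<Sum>i\<in>I. w i *\<^sub>R snd i) = (\<Sum>i\<in>Pair 0 ` S1 \<union> Pair 1 ` T2. w i *\<^sub>R snd i) + (\<Sum>i\<in>Pair 2 ` T3. w i *\<^sub>R snd i)"
    unfolding I_def by (rule sum.union_disjoint) (use S1 T2 T3 in auto)
  also have "(\<Sum>i\<in>Pair 0 ` S1 \<union> Pair 1 ` T2. w i *\<^sub>R snd i) = (\<Sum>i\<in>Pair 0 ` S1. w i *\<^sub>R snd i) + (\<Sum>i\<in>Pair 1 ` T2. w i *\<^sub>R snd i)"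
    by (rule sum.union_disjoint) (use S1 T2 T3 in auto)
  finally have "(\<Sum>i\<in>I. w i *\<^sub>R snd i) = a + b + c"
    using S1(5) T2(4) T3(4) by (simp add: sum_Pair_image w_def)
  then have rel: "(\<Sum>i\<in>I. w i *\<^sub>R snd i) = 0" using x(4) by simp
  obtain v1 where v1: "v1 \<in> S1" "u v1 > 0"
  proof -
    assume r: "\<And>v1. v1 \<in> S1 \<Longrightarrow> 0 < u v1 \<Longrightarrow> thesis"
    show thesis
    proof (rule ccontr)
      assume "\<not> thesis"
      then have "\<forall>v\<in>S1. u v = 0" using r S1(3) by force
      then have "sum u S1 = 0" by simp
      then show False using S1(4) by simp
    qed
  qed
  have i1: "(0, v1) \<in> I" "fst (0::nat, v1) = 0" "w (0, v1) > 0" using v1 by (auto simp: I_def w_def)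
  obtain J cJ where J: "J \<subseteq> I" "\<exists>j\<in>J. fst j = 0" "\<forall>j\<in>J. cJ j > 0" "(\<Sum>j\<in>J. cJ j *\<^sub>R snd j) = 0"
    "\<forall>e. (\<Sum>j\<in>J. e j *\<^sub>R snd j) = 0 \<longrightarrow> (\<exists>t. \<forall>j\<in>J. e j = t * cJ j)"
    using minimal_relation[where vec=snd and Q="\<lambda>i. fst i = (0::nat)", OF fI wnn rel i1] by blast
  have fJ: "finite J" using J(1) fI finite_subset by blast
  define J0 where "J0 = {j\<in>J. fst j = (0::nat)}"
  define J1 where "J1 = {j\<in>J. fst j = 1}"
  define J2 where "J2 = {j\<in>J. fst j = 2}"
  have fJs: "finite J0" "finite J1" "finite J2" using fJ by (auto simp: J0_def J1_def J2_def)
  have Jun: "J = (J0 \<union> J1) \<union> J2" using J(1) by (auto simp: J0_def J1_def J2_def I_def)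
  define k0 where "k0 = card J0"
  define i0 where "i0 = k0 + card J1"
  define p where "p = i0 + card J2"
  have k0: "1 \<le> k0" using J(2) fJs(1) unfolding k0_def J0_def
    by (metis (mono_tags, lifting) One_nat_def Suc_leI card_gt_0_iff empty_iff mem_Collect_eq)
  obtain h0 where h0: "bij_betw h0 {0<..k0} J0" using ex_bij_shift[OF fJs(1), of 0] by (auto simp: k0_def)
  obtain h1 where h1: "bij_betw h1 {k0<..i0} J1" using ex_bij_shift[OF fJs(2), of k0] by (auto simp: i0_def)
  obtain h2 where h2: "bij_betw h2 {i0<..p} J2" using ex_bij_shift[OF fJs(3), of i0] by (auto simp: p_def)
  define idx where "idx s = (if s \<le> k0 then h0 s else if s \<le> i0 then h1 s else h2 s)" for s
  have b0: "bij_betw idx {0<..k0} J0" by (rule bij_betw_cong[THEN iffD1, OF _ h0]) (auto simp: idx_def)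
  have b1: "bij_betw idx {k0<..i0} J1" by (rule bij_betw_cong[THEN iffD1, OF _ h1]) (auto simp: idx_def)
  have b2: "bij_betw idx {i0<..p} J2" by (rule bij_betw_cong[THEN iffD1, OF _ h2]) (auto simp: idx_def i0_def)
  have "bij_betw idx (({0<..k0} \<union> {k0<..i0}) \<union> {i0<..p}) J"
    unfolding Jun
    by (intro bij_betw_combine b0 b1 b2) (auto simp: J0_def J1_def J2_def)
  moreover have "({0<..k0} \<union> {k0<..i0}) \<union> {i0<..p} = {1..p}" by (auto simp: i0_def p_def)
  ultimately have bidx: "bij_betw idx {1..p} J" by simp
  define V0 where "V0 s = snd (idx s)" for s
  define g where "g s = cJ (idx s)" for s
  have gpos: "\<forall>s\<in>{1..p}. g s > 0" using J(3) bidx by (auto simp: g_def dest: bij_betwE)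
  have grel: "(\<Sum>s\<in>{1..p}. g s *\<^sub>R V0 s) = 0"
    unfolding g_def V0_def using sum.reindex_bij_betw[OF bidx, of "\<lambda>j. cJ j *\<^sub>R snd j"] J(4) by simp
  have uniq: "\<forall>e. (\<Sum>s\<in>{1..p}. e s *\<^sub>R V0 s) = 0 \<longrightarrow> (\<exists>t. \<forall>s\<in>{1..p}. e s = t * g s)"
  proof (intro allI impI)
    fix e assume e: "(\<Sum>s\<in>{1..p}. e s *\<^sub>R V0 s) = 0"
    define e' where "e' j = e (inv_into {1..p} idx j)" for j
    have "(\<Sum>j\<in>J. e' j *\<^sub>R snd j) = (\<Sum>s\<in>{1..p}. e' (idx s) *\<^sub>R snd (idx s))"
      using sum.reindex_bij_betw[OF bidx, of "\<lambda>j. e' j *\<^sub>R snd j"] by simp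
    also have "\<dots> = (\<Sum>s\<in>{1..p}. e s *\<^sub>R V0 s)"
    proof (rule sum.cong)
      fix s assume "s \<in> {1..p}"
      then have "inv_into {1..p} idx (idx s) = s" by (rule bij_betw_inv_into_left[OF bidx])
      then show "e' (idx s) *\<^sub>R snd (idx s) = e s *\<^sub>R V0 s" by (simp add: e'_def V0_def)
    qed simp
    finally obtain t where t: "\<forall>j\<in>J. e' j = t * cJ j" using J(5) e by auto
    have "e s = t * g s" if "s \<in> {1..p}" for s
    proof -
      have "idx s \<in> J" using bidx that by (auto dest: bij_betwE)
      then have "e' (idx s) = t * cJ (idx s)" using t by auto
      moreover have "inv_into {1..p} idx (idx s) = s" using that by (rule bij_betw_inv_into_left[OF bidx])
      ultimately show ?thesis by (simp add: e'_def g_def)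
    qed
    then show "\<exists>t. \<forall>s\<in>{1..p}. e s = t * g s" by blast
  qed
  have p1: "1 \<le> p" using k0 by (simp add: p_def i0_def)
  obtain V where V: "p \<le> CARD('n)+1" "\<forall>s\<in>{1..p}. V s = V0 s" "\<forall>s\<in>{p<..CARD('n)+1}. V s \<in> Z"
     "\<forall>s\<in>{1..p}. Delta V s \<noteq> 0" "\<forall>s\<in>{1..<p}. sgn (Delta V s) = - sgn (Delta V (Suc s))"
     "\<forall>s\<in>{p<..CARD('n)+1}. Delta V s = 0"
    using build_alt[OF p1 gpos grel uniq Z] by blast
  have cat: "snd j \<in> Gr" if "j \<in> J0" for j
  proof -
    have "j \<in> I" "fst j = 0" using that J(1) by (auto simp: J0_def)
    then show ?thesis using S1(2) by (auto simp: I_def)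
  qed
  have cat1: "snd j \<in> eta" if "j \<in> J1" for j
  proof -
    have "j \<in> I" "fst j = 1" using that J(1) by (auto simp: J1_def)
    then show ?thesis using T2(2) by (auto simp: I_def)
  qed
  have cat2: "snd j \<in> nA" if "j \<in> J2" for j
  proof -
    have "j \<in> I" "fst j = 2" using that J(1) by (auto simp: J2_def)
    then show ?thesis using T3(2) by (auto simp: I_def)
  qed
  have o: "1 \<le> k0" "k0 \<le> i0" "i0 \<le> p" using k0 by (auto simp: i0_def p_def)
  have A0: "\<forall>s\<in>{1..k0}. V s \<in> Gr"
  proof
    fix s assume s: "s \<in> {1..k0}"
    then have "idx s \<in> J0" using b0 by (auto dest: bij_betwE)
    then show "V s \<in> Gr" using V(2) s cat by (auto simp: V0_def p_def i0_def)
  qed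
  have A1: "\<forall>s\<in>{k0<..i0}. V s \<in> eta"
  proof
    fix s assume s: "s \<in> {k0<..i0}"
    then have "idx s \<in> J1" using b1 by (auto dest: bij_betwE)
    then show "V s \<in> eta" using V(2) s cat1 by (auto simp: V0_def p_def i0_def)
  qed
  have A2: "\<forall>s\<in>{i0<..p}. V s \<in> nA"
  proof
    fix s assume s: "s \<in> {i0<..p}"
    then have "idx s \<in> J2" using b2 by (auto dest: bij_betwE)
    then show "V s \<in> nA" using V(2) s cat2 by (auto simp: V0_def p_def i0_def)
  qed
  have "alternance Gr eta nA Z p"
    unfolding alternance_def using o A0 A1 A2 V(3-6) by blast
  then show ?thesis using V(1) p1 by auto
qed

theorem theorem6:
  fixes A :: "(real^'n) set"
    and K :: "'y::banach set"
    and W :: "'w::t2_space set"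
    and f :: "real^'n \<Rightarrow> 'w \<Rightarrow> real"
    and grad :: "real^'n \<Rightarrow> 'w \<Rightarrow> real^'n"
    and G :: "real^'n \<Rightarrow> 'y"
    and DG :: "real^'n \<Rightarrow> ((real^'n) \<Rightarrow>\<^sub>L 'y)"
    and Z eta nA :: "(real^'n) set"
    and xs :: "real^'n"
  assumes A: "A \<noteq> {}" "closed A" "convex A"
    and K: "K \<noteq> {}" "closed K" "convex K" "cone K"
    and W: "W \<noteq> {}" "compact W"
    and f_deriv: "\<And>x w. w \<in> W \<Longrightarrow> ((\<lambda>y. f y w) has_derivative (\<lambda>h. grad x w \<bullet> h)) (at x)"
    and f_cont: "continuous_on (UNIV \<times> W) (\<lambda>(x, w). f x w)"
    and grad_cont: "continuous_on (UNIV \<times> W) (\<lambda>(x, w). grad x w)"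
    and G_deriv: "\<And>x. (G has_derivative blinfun_apply (DG x)) (at x)"
    and DG_cont: "continuous_on UNIV DG"
    and Z: "finite Z" "card Z = CARD('n)" "independent Z"
    and eta: "eta \<subseteq> Ncone G DG K xs" "conic_hull eta = Ncone G DG K xs"
    and nA: "nA \<subseteq> normal_cone A xs" "conic_hull nA = normal_cone A xs"
    and feasible: "G xs \<in> K" "xs \<in> A"
  defines "D \<equiv> {a + b + c | a b c. a \<in> subdiffF f grad W xs \<and> b \<in> Ncone G DG K xs \<and> c \<in> normal_cone A xs}"
  shows "(0 \<in> D \<longleftrightarrow> (\<exists>p\<in>{1..CARD('n)+1}. alternance (active_grads f grad W xs) eta nA Z p))
       \<and> (alternance (active_grads f grad W xs) eta nA Z (CARD('n)+1)
            \<longrightarrow> 0 \<in> interior D \<and> subdiffF f grad W xs \<noteq> {0})"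
proof -
  let ?Gr = "active_grads f grad W xs"
  have Deq: "D = {x + y + z | x y z. x \<in> convex hull ?Gr \<and> y \<in> Ncone G DG K xs \<and> z \<in> normal_cone A xs}"
    unfolding D_def subdiffF_def by simp
  have ccN: "cc (Ncone G DG K xs)" by (rule cc_Ncone)
  have ccA: "cc (normal_cone A xs)" by (rule cc_normal_cone)
  have P1: "0 \<in> D \<longleftrightarrow> (\<exists>p\<in>{1..CARD('n)+1}. alternance ?Gr eta nA Z p)"
  proof
    assume "0 \<in> D"
    then obtain a b c where abc: "a \<in> convex hull ?Gr" "b \<in> Ncone G DG K xs" "c \<in> normal_cone A xs" "a + b + c = 0"
      unfolding Deq by auto
    show "\<exists>p\<in>{1..CARD('n)+1}. alternance ?Gr eta nA Z p"
      by (rule D_to_alt[OF Z eta(2) nA(2) abc])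
  next
    assume "\<exists>p\<in>{1..CARD('n)+1}. alternance ?Gr eta nA Z p"
    then obtain p k0 i0 V where p: "p \<in> {1..CARD('n)+1}" and
      al: "1 \<le> k0" "k0 \<le> i0" "i0 \<le> p"
        "\<forall>s\<in>{1..k0}. V s \<in> ?Gr" "\<forall>s\<in>{k0<..i0}. V s \<in> eta" "\<forall>s\<in>{i0<..p}. V s \<in> nA"
        "\<forall>s\<in>{1..p}. Delta V s \<noteq> 0" "\<forall>s\<in>{1..<p}. sgn (Delta V s) = - sgn (Delta V (Suc s))"
        "\<forall>s\<in>{p<..CARD('n)+1}. Delta V s = 0"
      unfolding alternance_def by blast
    obtain g where g: "\<forall>s\<in>{1..p}. g s > 0" "(\<Sum>s\<in>{1..p}. g s *\<^sub>R V s) = 0"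
      using alt_core[of p V] p al(7-9) by auto
    have V1: "\<forall>s\<in>{k0<..i0}. V s \<in> Ncone G DG K xs" using al(5) eta(1) by auto
    have V2: "\<forall>s\<in>{i0<..p}. V s \<in> normal_cone A xs" using al(6) nA(1) by auto
    show "0 \<in> D" unfolding Deq by (rule alt_in_D[OF al(1-4) V1 V2 ccN ccA g])
  qed
  have P2: "alternance ?Gr eta nA Z (CARD('n)+1) \<longrightarrow> 0 \<in> interior D \<and> subdiffF f grad W xs \<noteq> {0}"
  proof
    assume "alternance ?Gr eta nA Z (CARD('n)+1)"
    then obtain k0 i0 V where
      al: "1 \<le> k0" "k0 \<le> i0" "i0 \<le> CARD('n)+1"
        "\<forall>s\<in>{1..k0}. V s \<in> ?Gr" "\<forall>s\<in>{k0<..i0}. V s \<in> eta" "\<forall>s\<in>{i0<..CARD('n)+1}. V s \<in> nA"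
        "\<forall>s\<in>{1..CARD('n)+1}. Delta V s \<noteq> 0"
        "\<forall>s\<in>{1..<CARD('n)+1}. sgn (Delta V s) = - sgn (Delta V (Suc s))"
        "\<forall>s\<in>{CARD('n)+1<..CARD('n)+1}. Delta V s = 0"
      unfolding alternance_def by blast
    obtain g where g: "\<forall>s\<in>{1..CARD('n)+1}. g s > 0" "(\<Sum>s\<in>{1..CARD('n)+1}. g s *\<^sub>R V s) = 0"
      using alt_core[of "CARD('n)+1" V] al(7-9) by auto
    have V1: "\<forall>s\<in>{k0<..i0}. V s \<in> Ncone G DG K xs" using al(5) eta(1) by auto
    have V2: "\<forall>s\<in>{i0<..CARD('n)+1}. V s \<in> normal_cone A xs" using al(6) nA(1) by auto
    have D1: "det (rowmat V 1) \<noteq> 0" using al(7) by (simp add: Delta_rowmat)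
    have "0 \<in> interior D" unfolding Deq by (rule alt_interior[OF al(1-4) V1 V2 ccN ccA g D1])
    moreover have "subdiffF f grad W xs \<noteq> {0}"
    proof
      assume h: "subdiffF f grad W xs = {0}"
      have "V 1 \<in> convex hull ?Gr" using al(1,4) by (auto intro: hull_inc)
      then have V10: "V 1 = 0" using h by (simp add: subdiffF_def)
      have c: "CARD('n) \<ge> 1" by (simp add: Suc_leI)
      have s2: "1 < (2::nat)" "2 \<le> CARD('n)+1" using c by auto
      have "V 1 - 0 *\<^sub>R V 2 \<in> span (V ` ({2..CARD('n)+1} - {2}))" using V10 by (simp add: span_zero)
      then obtain M :: "real^'n^'n" where "Delta V 2 = 0 * det M" using first_slot[OF s2] by blast
      moreover have "Delta V 2 \<noteq> 0" using al(7) s2 by auto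
      ultimately show False by simp
    qed
    ultimately show "0 \<in> interior D \<and> subdiffF f grad W xs \<noteq> {0}" by blast
  qed
  show ?thesis using P1 P2 by blast
qed

end
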